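(* Let $(X,\sigma,T)$ be as in the context and suppose it has no extra spectrum. Let $\pi^L_{eq}:L\to L_{eq}$ be the maximal equicontinuous factor of $(L,\sigma_L)$ (neutral element $e_{eq}=\pi^L_{eq}(e)$), and let $\eta_0:L_{eq}\to X_{eq}$ be the factor map with $\tilde\pi_{eq}=\eta_0\circ\pi^L_{eq}$. Then $\eta_0$ is bijective and $L^{fib}=(\pi^L_{eq})^{-1}(e_{eq})$.
   Context: $T$ is an abelian group acting continuously by $\sigma$ on a compact Hausdorff space $X$; the action is minimal and not distal. $E(X)$ is the Ellis semigroup (closure of $\{\sigma^t\}$ in $X^X$ with pointwise topology), with $T$-action $\sigma_E^t(f)=\sigma^t\circ f$. $\pi_{eq}:X\to X_{eq}$ is the maximal equicontinuous factor; $X_{eq}$ is a compact abelian group with neutral element $0$ a singular point (a point whose fibre contains two distinct proximal points). Fix a minimal idempotent $e$, $L=E(X)e$, $\sigma_L$ the restriction of $\sigma_E$ to $L$, $\mathcal G=eL$. $\tilde\pi_{eq}:L\to X_{eq}$, $\tilde\pi_{eq}(f)=\pi_{eq}(f(x))-\pi_{eq}(x)$ (independent of $x$); it is an equicontinuous factor of $(L,\sigma_L)$. $L^{fib}=\{f\in L:\tilde\pi_{eq}(f)=0\}$, $\mathcal G^{fib}=\mathcal G\cap L^{fib}$. The little structure group $\Gamma\subset\mathcal G$ is generated by the entries of the sandwich matrix of a Rees matrix representation of the kernel of $E(X)$. For a subgroup $H$ of a right-topological group $G$, $\overline{\mathrm{ncl}_G(H)}$ is the topological closure of the smallest normal subgroup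 of $G$ containing $H$. The system has no extra spectrum (NES) if $\overline{\mathrm{ncl}_{\mathcal G}(\Gamma)}=\mathcal G^{fib}$. *)

theory Defs
  imports "HOL-Analysis.Analysis"
begin

section \<open>Topological dynamics (T an abelian group, treated as discrete)\<close>

definition action :: "('t::ab_group_add \<Rightarrow> 'a \<Rightarrow> 'a) \<Rightarrow> bool" where
  "action \<sigma> \<longleftrightarrow> \<sigma> 0 = id \<and> (\<forall>s t. \<sigma> (s + t) = \<sigma> s \<circ> \<sigma> t)"

definition minimal_sys :: "('t \<Rightarrow> 'a::topological_space \<Rightarrow> 'a) \<Rightarrow> bool" where
  "minimal_sys \<sigma> \<longleftrightarrow> (\<forall>A. closed A \<and> (\<forall>t. \<sigma> t ` A \<subseteq> A) \<longrightarrow> A = {} \<or> A = UNIV)"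

text \<open>Proximality w.r.t. the unique uniformity of a compact Hausdorff space
  (entourages = neighbourhoods of the diagonal).\<close>
definition proximal :: "('t \<Rightarrow> 'a::topological_space \<Rightarrow> 'a) \<Rightarrow> 'a \<Rightarrow> 'a \<Rightarrow> bool" where
  "proximal \<sigma> x y \<longleftrightarrow>
     (\<forall>W. open W \<and> (\<forall>z. (z, z) \<in> W) \<longrightarrow> (\<exists>t. (\<sigma> t x, \<sigma> t y) \<in> W))"

definition distal_sys :: "('t \<Rightarrow> 'a::topological_space \<Rightarrow> 'a) \<Rightarrow> bool" where
  "distal_sys \<sigma> \<longleftrightarrow> (\<forall>x y. proximal \<sigma> x y \<longrightarrow> x = y)"

text \<open>Equicontinuity of the family {rho t} on an abstract topological space Y,
  w.r.t. the unique uniformity of a compact Hausdorff space.\<close>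
definition equicont :: "'b topology \<Rightarrow> ('t \<Rightarrow> 'b \<Rightarrow> 'b) \<Rightarrow> bool" where
  "equicont Y \<rho> \<longleftrightarrow>
     (\<forall>y\<in>topspace Y. \<forall>W. openin (prod_topology Y Y) W \<and> (\<forall>z\<in>topspace Y. (z, z) \<in> W) \<longrightarrow>
        (\<exists>U. openin Y U \<and> y \<in> U \<and> (\<forall>t. \<forall>z\<in>U. (\<rho> t y, \<rho> t z) \<in> W)))"

definition eq_system :: "'b topology \<Rightarrow> ('t \<Rightarrow> 'b \<Rightarrow> 'b) \<Rightarrow> bool" where
  "eq_system Y \<rho> \<longleftrightarrow> compact_space Y \<and> Hausdorff_space Y \<and>
     (\<forall>t. continuous_map Y Y (\<rho> t)) \<and> equicont Y \<rho>"

definition factor_map :: "'a topology \<Rightarrow> ('t \<Rightarrow> 'a \<Rightarrow> 'a) \<Rightarrow> 'b topology \<Rightarrow> ('t \<Rightarrow> 'b \<Rightarrow> 'b)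
    \<Rightarrow> ('a \<Rightarrow> 'b) \<Rightarrow> bool" where
  "factor_map X \<sigma> Y \<rho> \<pi> \<longleftrightarrow> continuous_map X Y \<pi> \<and> \<pi> ` topspace X = topspace Y \<and>
     (\<forall>t. \<forall>x\<in>topspace X. \<pi> (\<sigma> t x) = \<rho> t (\<pi> x))"

text \<open>Every factor of X is isomorphic to a quotient of X, whose points are subsets of X;
  hence it suffices to quantify over factors with state space of type 'a set.\<close>
definition max_eq_factor :: "'a topology \<Rightarrow> ('t \<Rightarrow> 'a \<Rightarrow> 'a) \<Rightarrow> 'b topology \<Rightarrow> ('t \<Rightarrow> 'b \<Rightarrow> 'b)
    \<Rightarrow> ('a \<Rightarrow> 'b) \<Rightarrow> bool" where
  "max_eq_factor X \<sigma> Y \<rho> \<pi> \<longleftrightarrow> factor_map X \<sigma> Y \<rho> \<pi> \<and> eq_system Y \<rho> \<and>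
     (\<forall>(Z::'a set topology) \<rho>' \<psi>. factor_map X \<sigma> Z \<rho>' \<psi> \<and> eq_system Z \<rho>' \<longrightarrow>
        (\<forall>x\<in>topspace X. \<forall>x'\<in>topspace X. \<pi> x = \<pi> x' \<longrightarrow> \<psi> x = \<psi> x'))"

definition Ellis :: "('t \<Rightarrow> 'a \<Rightarrow> 'a::topological_space) \<Rightarrow> ('a \<Rightarrow> 'a) set" where
  "Ellis \<sigma> = closure (range \<sigma>)"

definition left_ideal :: "('a \<Rightarrow> 'a) set \<Rightarrow> ('a \<Rightarrow> 'a) set \<Rightarrow> bool" where
  "left_ideal E I \<longleftrightarrow> I \<subseteq> E \<and> I \<noteq> {} \<and> (\<forall>f\<in>E. \<forall>g\<in>I. f \<circ> g \<in> I)"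

definition minimal_left_ideal :: "('a \<Rightarrow> 'a) set \<Rightarrow> ('a \<Rightarrow> 'a) set \<Rightarrow> bool" where
  "minimal_left_ideal E I \<longleftrightarrow> left_ideal E I \<and> (\<forall>J. left_ideal E J \<and> J \<subseteq> I \<longrightarrow> J = I)"

definition minimal_idempotent :: "('a \<Rightarrow> 'a) set \<Rightarrow> ('a \<Rightarrow> 'a) \<Rightarrow> bool" where
  "minimal_idempotent E e \<longleftrightarrow> e \<in> E \<and> e \<circ> e = e \<and> (\<exists>I. minimal_left_ideal E I \<and> e \<in> I)"

definition Lid :: "('a \<Rightarrow> 'a) set \<Rightarrow> ('a \<Rightarrow> 'a) \<Rightarrow> ('a \<Rightarrow> 'a) set" where
  "Lid E e = {f \<circ> e |f. f \<in> E}"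

definition Grp :: "('a \<Rightarrow> 'a) set \<Rightarrow> ('a \<Rightarrow> 'a) \<Rightarrow> ('a \<Rightarrow> 'a) set" where
  "Grp E e = {e \<circ> f |f. f \<in> Lid E e}"

definition sigmaE :: "('t \<Rightarrow> 'a \<Rightarrow> 'a) \<Rightarrow> 't \<Rightarrow> ('a \<Rightarrow> 'a) \<Rightarrow> ('a \<Rightarrow> 'a)" where
  "sigmaE \<sigma> t f = \<sigma> t \<circ> f"

text \<open>pi-tilde; independent of the base point, which we fix as an arbitrary point.\<close>
definition pitilde :: "('a \<Rightarrow> 'g::ab_group_add) \<Rightarrow> ('a \<Rightarrow> 'a) \<Rightarrow> 'g" where
  "pitilde \<pi> f = \<pi> (f undefined) - \<pi> undefined"

definition Lfib :: "('a \<Rightarrow> 'g::ab_group_add) \<Rightarrow> ('a \<Rightarrow> 'a) set \<Rightarrow> ('a \<Rightarrow> 'a) \<Rightarrow> ('a \<Rightarrow> 'a) set" where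
  "Lfib \<pi> E e = {f \<in> Lid E e. pitilde \<pi> f = 0}"

definition ginv :: "('a \<Rightarrow> 'a) set \<Rightarrow> ('a \<Rightarrow> 'a) \<Rightarrow> ('a \<Rightarrow> 'a) \<Rightarrow> ('a \<Rightarrow> 'a)" where
  "ginv G e a = (THE b. b \<in> G \<and> a \<circ> b = e \<and> b \<circ> a = e)"

definition subgrp :: "('a \<Rightarrow> 'a) set \<Rightarrow> ('a \<Rightarrow> 'a) \<Rightarrow> ('a \<Rightarrow> 'a) set \<Rightarrow> bool" where
  "subgrp G e H \<longleftrightarrow> H \<subseteq> G \<and> e \<in> H \<and> (\<forall>a\<in>H. \<forall>b\<in>H. a \<circ> b \<in> H) \<and> (\<forall>a\<in>H. ginv G e a \<in> H)"

definition normal_subgrp :: "('a \<Rightarrow> 'a) set \<Rightarrow> ('a \<Rightarrow> 'a) \<Rightarrow> ('a \<Rightarrow> 'a) set \<Rightarrow> bool" where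
  "normal_subgrp G e N \<longleftrightarrow> subgrp G e N \<and> (\<forall>g\<in>G. \<forall>n\<in>N. g \<circ> n \<circ> ginv G e g \<in> N)"

definition gen_subgrp :: "('a \<Rightarrow> 'a) set \<Rightarrow> ('a \<Rightarrow> 'a) \<Rightarrow> ('a \<Rightarrow> 'a) set \<Rightarrow> ('a \<Rightarrow> 'a) set" where
  "gen_subgrp G e S = \<Inter>{H. subgrp G e H \<and> S \<subseteq> H}"

definition ncl :: "('a \<Rightarrow> 'a) set \<Rightarrow> ('a \<Rightarrow> 'a) \<Rightarrow> ('a \<Rightarrow> 'a) set \<Rightarrow> ('a \<Rightarrow> 'a) set" where
  "ncl G e H = \<Inter>{N. normal_subgrp G e N \<and> H \<subseteq> N}"

text \<open>Little structure group: generated by the entries v o u of the sandwich matrix of the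
  Rees matrix representation K(E) = I x G x Lambda, (u,g,v) |-> u o g o v, where I are the
  idempotents of the minimal left ideal E e and Lambda the idempotents of the minimal right
  ideal e E.\<close>
definition little_group :: "('a \<Rightarrow> 'a) set \<Rightarrow> ('a \<Rightarrow> 'a) \<Rightarrow> ('a \<Rightarrow> 'a) set" where
  "little_group E e = gen_subgrp (Grp E e) e
     {v \<circ> u |u v. u \<in> Lid E e \<and> u \<circ> u = u \<and> v \<in> {e \<circ> f |f. f \<in> E} \<and> v \<circ> v = v}"

text \<open>No extra spectrum (closure taken in G with the subspace topology of X^X).\<close>
definition NES :: "('a \<Rightarrow> 'g::ab_group_add) \<Rightarrow> ('a \<Rightarrow> 'a::topological_space) set \<Rightarrow> ('a \<Rightarrow> 'a) \<Rightarrow> bool" where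
  "NES \<pi> E e \<longleftrightarrow>
     closure (ncl (Grp E e) e (little_group E e)) \<inter> Grp E e = Grp E e \<inter> Lfib \<pi> E e"

end

theory Submission imports Defs begin

lemma cont_rcomp: "continuous_on UNIV (\<lambda>k::'a\<Rightarrow>'b::topological_space. k \<circ> f)"
  by (intro continuous_on_coordinatewise_then_product) (simp add: o_def)

lemma cont_lcomp:
  fixes s :: "'b::topological_space \<Rightarrow> 'b"
  assumes "continuous_on UNIV s"
  shows "continuous_on UNIV (\<lambda>k::'a\<Rightarrow>'b. s \<circ> k)"
proof (intro continuous_on_coordinatewise_then_product)
  fix i
  show "continuous_on UNIV (\<lambda>k::'a\<Rightarrow>'b. (s \<circ> k) i)"
    unfolding o_def
    by (rule continuous_on_compose2[OF assms continuous_on_product_coordinates]) auto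
qed

lemma approx2:
  assumes "h \<in> closure R" "h \<in> E" "R \<subseteq> E" "continuous_on E F1" "continuous_on E F2"
    "open U1" "open U2" "F1 h \<in> U1" "F2 h \<in> U2"
  shows "\<exists>k\<in>R. F1 k \<in> U1 \<and> F2 k \<in> U2"
proof -
  obtain A1 where A1: "open A1" "A1 \<inter> E = F1 -` U1 \<inter> E"
    using assms(4,6) continuous_on_open_invariant by metis
  obtain A2 where A2: "open A2" "A2 \<inter> E = F2 -` U2 \<inter> E"
    using assms(5,7) continuous_on_open_invariant by metis
  have "h \<in> A1 \<inter> A2" using A1 A2 assms by blast
  moreover have "open (A1 \<inter> A2)" using A1 A2 by auto
  ultimately have "R \<inter> (A1 \<inter> A2) \<noteq> {}"
    using assms(1) closure_iff_nhds_not_empty by blast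
  then obtain k where "k \<in> R" "k \<in> A1" "k \<in> A2" by blast
  then show ?thesis using A1 A2 assms(3) by blast
qed

locale ell =
  fixes \<sigma> :: "'t::ab_group_add \<Rightarrow> 'x::topological_space \<Rightarrow> 'x" and e :: "'x \<Rightarrow> 'x"
  assumes act: "action \<sigma>" and cont: "\<And>t. continuous_on UNIV (\<sigma> t)"
    and emin: "minimal_idempotent (Ellis \<sigma>) e"
begin

abbreviation "E \<equiv> Ellis \<sigma>"
abbreviation "L \<equiv> Lid E e"
abbreviation "G \<equiv> Grp E e"

lemma closedE: "closed E" unfolding Ellis_def by simp

lemma rangeE: "\<sigma> t \<in> E" unfolding Ellis_def by (rule closure_subset[THEN subsetD]) (rule rangeI)

lemma rangeE': "range \<sigma> \<subseteq> E" using rangeE by blast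

lemma lmulE: assumes "h \<in> E" shows "\<sigma> t \<circ> h \<in> E"
proof -
  have "(\<lambda>k. \<sigma> t \<circ> k) ` closure (range \<sigma>) \<subseteq> closure (range \<sigma>)"
  proof (rule image_closure_subset)
    show "continuous_on (closure (range \<sigma>)) (\<lambda>k. \<sigma> t \<circ> k)"
      using cont_lcomp[OF cont] continuous_on_subset by blast
    show "(\<lambda>k. \<sigma> t \<circ> k) ` range \<sigma> \<subseteq> closure (range \<sigma>)"
    proof
      fix k assume "k \<in> (\<lambda>k. \<sigma> t \<circ> k) ` range \<sigma>"
      then obtain s where "k = \<sigma> t \<circ> \<sigma> s" by auto
      then have "k = \<sigma> (t + s)" using act unfolding action_def by simp
      then show "k \<in> closure (range \<sigma>)" by (simp add: closure_subset[THEN subsetD])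
    qed
  qed simp
  then show ?thesis using assms unfolding Ellis_def by blast
qed

lemma mulE: assumes "a \<in> E" "b \<in> E" shows "a \<circ> b \<in> E"
proof -
  have "(\<lambda>k. k \<circ> b) ` closure (range \<sigma>) \<subseteq> E"
  proof (rule image_closure_subset)
    show "continuous_on (closure (range \<sigma>)) (\<lambda>k. k \<circ> b)"
      using cont_rcomp continuous_on_subset by blast
    show "(\<lambda>k. k \<circ> b) ` range \<sigma> \<subseteq> E" using lmulE[OF assms(2)] by auto
  qed (rule closedE)
  then show ?thesis using assms unfolding Ellis_def by blast
qed

lemma eE: "e \<in> E" and ee: "e \<circ> e = e"
  using emin unfolding minimal_idempotent_def by auto

lemma L_iff: "f \<in> L \<longleftrightarrow> (\<exists>k. f = k \<circ> e \<and> k \<in> E)"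
  unfolding Lid_def by auto

lemma LE: "f \<in> L \<Longrightarrow> f \<in> E" using L_iff mulE eE by auto

lemma Le: "f \<in> L \<Longrightarrow> f \<circ> e = f" using L_iff ee by (metis comp_assoc)

lemma eL: "e \<in> L" using L_iff eE ee by metis

lemma mulL: "h \<in> E \<Longrightarrow> f \<in> L \<Longrightarrow> h \<circ> f \<in> L"
  using L_iff mulE by (metis comp_assoc)

lemma G_iff: "g \<in> G \<longleftrightarrow> (\<exists>f. g = e \<circ> f \<and> f \<in> L)"
  unfolding Grp_def by auto

lemma GL: "g \<in> G \<Longrightarrow> g \<in> L" using G_iff mulL eE by auto

lemma Ge1: "g \<in> G \<Longrightarrow> e \<circ> g = g" using G_iff ee by (metis comp_assoc)

lemma Ge2: "g \<in> G \<Longrightarrow> g \<circ> e = g" using GL Le by blast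

lemma eG: "e \<in> G" using G_iff eL ee by metis

lemma mulG: assumes "a \<in> G" "b \<in> G" shows "a \<circ> b \<in> G"
proof -
  obtain f where f: "a = e \<circ> f" "f \<in> L" using assms(1) G_iff by blast
  have "f \<circ> b \<in> L" using mulL[OF LE[OF f(2)] GL[OF assms(2)]] .
  moreover have "a \<circ> b = e \<circ> (f \<circ> b)" using f(1) by (simp add: comp_assoc)
  ultimately show ?thesis using G_iff by blast
qed

lemma minimal: assumes "g \<in> L" "f \<in> L" shows "\<exists>k\<in>E. f = k \<circ> g"
proof -
  obtain I where mI: "minimal_left_ideal E I" "e \<in> I"
    using emin unfolding minimal_idempotent_def by auto
  have Iid: "\<And>f g. f \<in> E \<Longrightarrow> g \<in> I \<Longrightarrow> f \<circ> g \<in> I"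
    using mI unfolding minimal_left_ideal_def left_ideal_def by blast
  have "left_ideal E L"
    unfolding left_ideal_def using LE eL mulL by blast
  moreover have "L \<subseteq> I"
  proof
    fix f assume "f \<in> L"
    then obtain k where "f = k \<circ> e" "k \<in> E" using L_iff by blast
    then show "f \<in> I" using Iid mI(2) by simp
  qed
  ultimately have LI: "L = I" using mI unfolding minimal_left_ideal_def by blast
  define J where "J = {k \<circ> g |k. k \<in> E}"
  have "left_ideal E J"
    unfolding left_ideal_def J_def using mulE LE assms(1) eE
    by (auto simp: comp_assoc) (metis comp_assoc mulE)
  moreover have "J \<subseteq> I" unfolding J_def using mulL assms(1) LI by blast
  ultimately have "J = I" using mI unfolding minimal_left_ideal_def by blast
  then show ?thesis using assms(2) LI unfolding J_def by blast
qed

lemma left_inv: assumes "g \<in> G" shows "\<exists>b\<in>G. b \<circ> g = e"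
proof -
  obtain k where k: "k \<in> E" "e = k \<circ> g" using minimal[OF GL[OF assms] eL] by blast
  have "e \<circ> (k \<circ> e) \<in> G" using G_iff L_iff k by blast
  moreover have "e \<circ> (k \<circ> e) \<circ> g = e"
    using k Ge1[OF assms] ee by (metis comp_assoc)
  ultimately show ?thesis by blast
qed

lemma inv_ex: assumes "g \<in> G" shows "\<exists>b\<in>G. b \<circ> g = e \<and> g \<circ> b = e"
proof -
  obtain b where b: "b \<in> G" "b \<circ> g = e" using left_inv assms by blast
  obtain c where c: "c \<in> G" "c \<circ> b = e" using left_inv b by blast
  have "g \<circ> b = e \<circ> g \<circ> b" using Ge1 assms by simp
  also have "\<dots> = c \<circ> b \<circ> g \<circ> b" using c by simp
  also have "\<dots> = c \<circ> e \<circ> b" using b by (simp add: comp_assoc)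
  also have "\<dots> = e" using c Ge1 b by (simp add: comp_assoc)
  finally show ?thesis using b by blast
qed

lemma ginv: assumes "g \<in> G"
  shows "ginv G e g \<in> G" "ginv G e g \<circ> g = e" "g \<circ> ginv G e g = e"
proof -
  obtain b where b: "b \<in> G" "b \<circ> g = e" "g \<circ> b = e" using inv_ex assms by blast
  have "ginv G e g = b" unfolding ginv_def
  proof (rule the_equality)
    fix b' assume b': "b' \<in> G \<and> g \<circ> b' = e \<and> b' \<circ> g = e"
    have "b' = e \<circ> b'" using Ge1 b' by simp
    also have "\<dots> = b \<circ> g \<circ> b'" using b by simp
    also have "\<dots> = b \<circ> (g \<circ> b')" by (simp add: comp_assoc)
    also have "\<dots> = b" using b' Ge2[OF b(1)] by simp
    finally show "b' = b" .
  qed (use b in auto)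
  then show "ginv G e g \<in> G" "ginv G e g \<circ> g = e" "g \<circ> ginv G e g = e" using b by auto
qed

end

locale ell2 = ell \<sigma> e for \<sigma> :: "'t::ab_group_add \<Rightarrow> 'x::topological_space \<Rightarrow> 'x" and e +
  fixes \<pi>L :: "('x \<Rightarrow> 'x) \<Rightarrow> 'h::topological_space" and \<rho>L :: "'t \<Rightarrow> 'h \<Rightarrow> 'h"
  assumes fac: "factor_map (top_of_set (Lid (Ellis \<sigma>) e)) (sigmaE \<sigma>) euclidean \<rho>L \<pi>L"
    and eqs: "eq_system euclidean \<rho>L"
begin

lemma piL_cont: "continuous_on L \<pi>L" using fac unfolding factor_map_def by simp

lemma piL_surj: "\<pi>L ` L = UNIV" using fac unfolding factor_map_def by simp

lemma piL_eqv: "f \<in> L \<Longrightarrow> \<pi>L (\<sigma> t \<circ> f) = \<rho>L t (\<pi>L f)"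
  using fac unfolding factor_map_def sigmaE_def by simp

lemma contF: assumes "f \<in> L" shows "continuous_on E (\<lambda>k. \<pi>L (k \<circ> f))"
proof (rule continuous_on_compose2[OF piL_cont])
  show "continuous_on E (\<lambda>k. k \<circ> f)" using cont_rcomp continuous_on_subset by blast
  show "(\<lambda>k. k \<circ> f) ` E \<subseteq> L" using mulL assms by blast
qed

lemma Haus: "Hausdorff_space (euclidean :: 'h topology)"
  using eqs unfolding eq_system_def by simp

lemma sep: assumes "(a::'h) \<noteq> b"
  shows "\<exists>A B. open A \<and> open B \<and> a \<in> A \<and> b \<in> B \<and> A \<inter> B = {}"
proof -
  have "\<exists>U V. openin euclidean U \<and> openin euclidean V \<and> a \<in> U \<and> b \<in> V \<and> disjnt U V"
    using Haus assms unfolding Hausdorff_space_def by simp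
  then obtain U V where UV: "openin euclidean U" "openin euclidean V" "a \<in> U" "b \<in> V" "disjnt U V"
    by blast
  have "open U" "open V" using UV(1,2) open_openin[THEN iffD2] by auto
  moreover have "U \<inter> V = {}" using UV(5) by (simp add: disjnt_def)
  ultimately show ?thesis using UV(3,4) by blast
qed

lemma closed_pt: "closed {a::'h}"
  using closedin_t1_singleton[OF Hausdorff_imp_t1_space[OF Haus]] closed_closedin by auto

lemma rho_inv: "\<rho>L (-t) (\<rho>L t z) = z"
proof -
  obtain f where f: "f \<in> L" "z = \<pi>L f" using piL_surj by blast
  have "\<sigma> t \<circ> f \<in> L" using mulL rangeE f by blast
  then have "\<rho>L (-t) (\<rho>L t z) = \<pi>L (\<sigma> (-t) \<circ> (\<sigma> t \<circ> f))"
    using piL_eqv f by simp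
  also have "\<sigma> (-t) \<circ> (\<sigma> t \<circ> f) = f"
    using act unfolding action_def by (metis comp_assoc add.left_inverse id_comp)
  finally show ?thesis using f by simp
qed

lemma KL: assumes "h \<in> E" "f \<in> L" "f' \<in> L" "\<pi>L f = \<pi>L f'"
  shows "\<pi>L (h \<circ> f) = \<pi>L (h \<circ> f')"
proof (rule ccontr)
  assume ne: "\<pi>L (h \<circ> f) \<noteq> \<pi>L (h \<circ> f')"
  obtain A B where AB: "open A" "open B" "\<pi>L (h \<circ> f) \<in> A" "\<pi>L (h \<circ> f') \<in> B" "A \<inter> B = {}"
    using sep[OF ne] by blast
  have "\<exists>k\<in>range \<sigma>. \<pi>L (k \<circ> f) \<in> A \<and> \<pi>L (k \<circ> f') \<in> B"
  proof (rule approx2[of h "range \<sigma>" E "\<lambda>k. \<pi>L (k \<circ> f)" "\<lambda>k. \<pi>L (k \<circ> f')" A B])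
    show "h \<in> closure (range \<sigma>)" using assms(1) unfolding Ellis_def .
  qed (use assms(1) rangeE' contF[OF assms(2)] contF[OF assms(3)] AB in simp_all)
  then obtain k where k: "k \<in> range \<sigma>" "\<pi>L (k \<circ> f) \<in> A" "\<pi>L (k \<circ> f') \<in> B"
    by blast
  then obtain t where "k = \<sigma> t" by blast
  then have eq: "\<pi>L (k \<circ> f) = \<pi>L (k \<circ> f')" using piL_eqv assms by simp
  have "\<pi>L (k \<circ> f) \<in> A \<inter> B" using k(2,3) eq by simp
  then show False using AB(5) by simp
qed

lemma Idem: assumes "u \<in> E" "u \<circ> u = u" "f \<in> L"
  shows "\<pi>L (u \<circ> f) = \<pi>L f"
proof (rule ccontr)
  define y where "y = \<pi>L f"
  define p where "p = \<pi>L (u \<circ> f)"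
  assume "\<pi>L (u \<circ> f) \<noteq> \<pi>L f"
  then have yp: "y \<noteq> p" unfolding y_def p_def by simp
  obtain A B where AB: "open A" "open B" "y \<in> A" "p \<in> B" "A \<inter> B = {}"
    using sep[OF yp] by blast
  define C where "C = - {y, p}"
  have "closed ({y} \<union> {p})" using closed_pt by (intro closed_Un)
  moreover have "C = - ({y} \<union> {p})" unfolding C_def by auto
  ultimately have oC: "open C" by (simp add: open_Compl)
  define W where "W = A \<times> A \<union> B \<times> B \<union> C \<times> C"
  have oW: "openin (prod_topology euclidean euclidean) W"
    unfolding W_def prod_topology_euclidean open_openin[symmetric]
    using AB oC by (intro open_Un open_Times) auto
  have dW: "\<forall>z\<in>topspace euclidean. (z, z) \<in> W" unfolding W_def C_def using AB by auto
  have "equicont euclidean \<rho>L" using eqs unfolding eq_system_def by simp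
  have "\<exists>U. openin euclidean U \<and> p \<in> U \<and> (\<forall>t. \<forall>z\<in>U. (\<rho>L t p, \<rho>L t z) \<in> W)"
    using \<open>equicont euclidean \<rho>L\<close> oW dW unfolding equicont_def topspace_euclidean by blast
  then obtain U where U: "openin euclidean U" "p \<in> U" "\<forall>t. \<forall>z\<in>U. (\<rho>L t p, \<rho>L t z) \<in> W"
    by blast
  have oU: "open U" using U(1) open_openin[THEN iffD2] by auto
  have uf: "u \<circ> f \<in> L" using mulL assms by blast
  have "u \<circ> (u \<circ> f) = u \<circ> f" using assms(2) by (metis comp_assoc)
  have "\<exists>k\<in>range \<sigma>. \<pi>L (k \<circ> f) \<in> U \<and> \<pi>L (k \<circ> (u \<circ> f)) \<in> U"
  proof (rule approx2[of u "range \<sigma>" E "\<lambda>k. \<pi>L (k \<circ> f)" "\<lambda>k. \<pi>L (k \<circ> (u \<circ> f))" U U])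
    show "u \<in> closure (range \<sigma>)" using assms(1) unfolding Ellis_def .
    show "\<pi>L (u \<circ> f) \<in> U" using U(2) unfolding p_def .
    show "\<pi>L (u \<circ> (u \<circ> f)) \<in> U" using U(2) \<open>u \<circ> (u \<circ> f) = u \<circ> f\<close> unfolding p_def by simp
  qed (use assms(1) rangeE' contF[OF assms(3)] contF[OF uf] oU in simp_all)
  then obtain k where k: "k \<in> range \<sigma>" "\<pi>L (k \<circ> f) \<in> U" "\<pi>L (k \<circ> (u \<circ> f)) \<in> U"
    by blast
  then obtain t where t: "k = \<sigma> t" by blast
  have "\<rho>L t y \<in> U" "\<rho>L t p \<in> U" using k t piL_eqv assms(3) uf unfolding y_def p_def by auto
  then have "(\<rho>L (-t) p, \<rho>L (-t) (\<rho>L t y)) \<in> W" "(\<rho>L (-t) p, \<rho>L (-t) (\<rho>L t p)) \<in> W"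
    using U by auto
  then have "(\<rho>L (-t) p, y) \<in> W" "(\<rho>L (-t) p, p) \<in> W" using rho_inv by auto
  then show False unfolding W_def C_def using AB yp by blast
qed

definition "Kset = {g \<in> E. \<forall>f\<in>L. \<pi>L (g \<circ> f) = \<pi>L f}"

lemma K_closed: "closed Kset"
proof -
  have "Kset = E \<inter> (\<Inter>f\<in>L. {g \<in> E. \<pi>L (g \<circ> f) = \<pi>L f})" unfolding Kset_def by auto
  moreover have "closed {g \<in> E. \<pi>L (g \<circ> f) = \<pi>L f}" if "f \<in> L" for f
  proof -
    have "{g \<in> E. \<pi>L (g \<circ> f) = \<pi>L f} = E \<inter> (\<lambda>g. \<pi>L (g \<circ> f)) -` {\<pi>L f}" by auto
    then show ?thesis using continuous_closed_preimage[OF contF[OF that] closedE closed_pt[of "\<pi>L f"]]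
      by simp
  qed
  then have "closed (\<Inter>f\<in>L. {g \<in> E. \<pi>L (g \<circ> f) = \<pi>L f})" by (intro closed_INT) blast
  ultimately show ?thesis using closedE by (simp add: closed_Int)
qed

lemma K_normal: "normal_subgrp G e (Kset \<inter> G)"
proof -
  have eK: "e \<in> Kset" unfolding Kset_def using Idem eE ee by auto
  have mK: "a \<circ> b \<in> Kset" if "a \<in> Kset" "b \<in> Kset" for a b
    using that mulE mulL unfolding Kset_def by (auto simp: comp_assoc)
  have iK: "ginv G e a \<in> Kset" if "a \<in> Kset \<inter> G" for a
  proof -
    let ?b = "ginv G e a"
    have b: "?b \<in> G" "?b \<circ> a = e" using ginv that by auto
    have "\<pi>L (?b \<circ> f) = \<pi>L f" if f: "f \<in> L" for f
    proof -
      have "\<pi>L (a \<circ> f) = \<pi>L f" using \<open>a \<in> Kset \<inter> G\<close> f unfolding Kset_def by auto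
      then have "\<pi>L (?b \<circ> (a \<circ> f)) = \<pi>L (?b \<circ> f)"
        using KL b GL LE f mulL \<open>a \<in> Kset \<inter> G\<close> by (meson IntD2)
      moreover have "?b \<circ> (a \<circ> f) = e \<circ> f" using b by (metis comp_assoc)
      ultimately show ?thesis using Idem eE ee f by simp
    qed
    then show ?thesis unfolding Kset_def using b GL LE by auto
  qed
  have nK: "g \<circ> n \<circ> ginv G e g \<in> Kset" if "g \<in> G" "n \<in> Kset \<inter> G" for g n
  proof -
    let ?b = "ginv G e g"
    have b: "?b \<in> G" "g \<circ> ?b = e" using ginv that by auto
    have "\<pi>L (g \<circ> n \<circ> ?b \<circ> f) = \<pi>L f" if f: "f \<in> L" for f
    proof -
      have bf: "?b \<circ> f \<in> L" using b GL LE mulL f by blast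
      then have "\<pi>L (n \<circ> (?b \<circ> f)) = \<pi>L (?b \<circ> f)" using \<open>n \<in> Kset \<inter> G\<close> unfolding Kset_def by auto
      then have "\<pi>L (g \<circ> (n \<circ> (?b \<circ> f))) = \<pi>L (g \<circ> (?b \<circ> f))"
        using KL that GL LE bf mulL \<open>n \<in> Kset \<inter> G\<close> \<open>g \<in> G\<close> by (meson IntD2)
      moreover have "g \<circ> (?b \<circ> f) = e \<circ> f" using b by (metis comp_assoc)
      ultimately show ?thesis using Idem eE ee f by (simp add: comp_assoc)
    qed
    moreover have "g \<circ> n \<circ> ?b \<in> G" using mulG b that by blast
    ultimately show ?thesis unfolding Kset_def using GL LE by (auto simp: comp_assoc)
  qed
  show ?thesis
    unfolding normal_subgrp_def subgrp_def
    apply (intro conjI ballI)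
    subgoal by blast
    subgoal using eK eG by blast
    subgoal for a b using mK[of a b] mulG[of a b] by blast
    subgoal for a using iK[of a] ginv(1)[of a] by blast
    subgoal for g n using nK[of g n] mulG ginv(1)[of g] by blast
    done
qed

lemma little_K: "little_group E e \<subseteq> Kset \<inter> G"
proof -
  have "v \<circ> u \<in> Kset \<inter> G" if uv: "u \<in> L" "u \<circ> u = u" "v \<in> {e \<circ> f |f. f \<in> E}" "v \<circ> v = v" for u v
  proof -
    obtain k where k: "v = e \<circ> k" "k \<in> E" using uv(3) by blast
    have vE: "v \<in> E" using k mulE eE by blast
    have "k \<circ> u \<in> L" using mulL[OF k(2) \<open>u \<in> L\<close>] .
    moreover have "v \<circ> u = e \<circ> (k \<circ> u)" using k(1) by (simp add: comp_assoc)
    ultimately have "v \<circ> u \<in> G" unfolding G_iff by blast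
    moreover have "\<pi>L (v \<circ> u \<circ> f) = \<pi>L f" if "f \<in> L" for f
      using Idem[OF vE \<open>v \<circ> v = v\<close>] Idem[OF LE[OF \<open>u \<in> L\<close>] \<open>u \<circ> u = u\<close>] mulL LE that \<open>u \<in> L\<close>
      by (simp add: comp_assoc)
    ultimately show ?thesis unfolding Kset_def using GL LE by auto
  qed
  then show ?thesis
    unfolding little_group_def gen_subgrp_def
    using K_normal unfolding normal_subgrp_def by blast
qed

lemma closure_ncl_K: "closure (ncl G e (little_group E e)) \<subseteq> Kset"
proof -
  have "ncl G e (little_group E e) \<subseteq> Kset \<inter> G"
    unfolding ncl_def using K_normal little_K by blast
  then have "closure (ncl G e (little_group E e)) \<subseteq> closure Kset"
    by (meson closure_mono le_inf_iff)
  then show ?thesis using K_closed closure_closed by blast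
qed

end

theorem mainTheorem3:
  fixes \<sigma> :: "'t::ab_group_add \<Rightarrow> 'x::t2_space \<Rightarrow> 'x"
    and \<pi>eq :: "'x \<Rightarrow> 'g::{topological_ab_group_add, t2_space}"
    and \<phi> :: "'t \<Rightarrow> 'g"
    and e :: "'x \<Rightarrow> 'x"
    and \<pi>L :: "('x \<Rightarrow> 'x) \<Rightarrow> 'h::topological_space"
    and \<rho>L :: "'t \<Rightarrow> 'h \<Rightarrow> 'h"
    and \<eta>0 :: "'h \<Rightarrow> 'g"
  assumes X_compact: "compact (UNIV :: 'x set)"
    and act: "action \<sigma>"
    and cont: "\<And>t. continuous_on UNIV (\<sigma> t)"
    and minimal: "minimal_sys \<sigma>"
    and not_distal: "\<not> distal_sys \<sigma>"
    and Xeq_compact: "compact (UNIV :: 'g set)"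
    and Xeq_mef: "max_eq_factor euclidean \<sigma> euclidean (\<lambda>t y. y + \<phi> t) \<pi>eq"
    and singular: "\<exists>x1 x2. x1 \<noteq> x2 \<and> \<pi>eq x1 = 0 \<and> \<pi>eq x2 = 0 \<and> proximal \<sigma> x1 x2"
    and e_min: "minimal_idempotent (Ellis \<sigma>) e"
    and nes: "NES \<pi>eq (Ellis \<sigma>) e"
    and Leq_mef: "max_eq_factor (top_of_set (Lid (Ellis \<sigma>) e)) (sigmaE \<sigma>) euclidean \<rho>L \<pi>L"
    and eta0_factor: "factor_map euclidean \<rho>L euclidean (\<lambda>t y. y + \<phi> t) \<eta>0"
    and eta0_comp: "\<forall>f \<in> Lid (Ellis \<sigma>) e. pitilde \<pi>eq f = \<eta>0 (\<pi>L f)"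
  shows "bij \<eta>0 \<and> Lfib \<pi>eq (Ellis \<sigma>) e = {f \<in> Lid (Ellis \<sigma>) e. \<pi>L f = \<pi>L e}"
proof -
  interpret ell2 \<sigma> e \<pi>L \<rho>L
    using act cont e_min Leq_mef unfolding max_eq_factor_def by unfold_locales auto
  let ?pt = "pitilde \<pi>eq"
  have peq_cont: "continuous_on UNIV \<pi>eq" and peq_eqv: "\<And>t x. \<pi>eq (\<sigma> t x) = \<pi>eq x + \<phi> t"
    using Xeq_mef unfolding max_eq_factor_def factor_map_def by auto
  have ptE: "\<pi>eq (h y) = \<pi>eq y + ?pt h" if "h \<in> E" for h y
  proof -
    let ?S = "{h. \<pi>eq (h y) - \<pi>eq y = \<pi>eq (h undefined) - \<pi>eq undefined}"
    have ev: "continuous_on UNIV (\<lambda>h::'x\<Rightarrow>'x. \<pi>eq (h z))" for z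
      by (rule continuous_on_compose2[OF peq_cont continuous_on_product_coordinates]) auto
    have "closed ?S"
      by (intro closed_Collect_eq continuous_on_diff ev continuous_on_const)
    moreover have "range \<sigma> \<subseteq> ?S" using peq_eqv by auto
    ultimately have "E \<subseteq> ?S" unfolding Ellis_def by (rule closure_minimal[rotated])
    then show ?thesis using that unfolding pitilde_def by (force simp: algebra_simps)
  qed
  have ptadd: "?pt (a \<circ> b) = ?pt a + ?pt b" if "a \<in> E" "b \<in> E" for a b
    using ptE[OF that(1), of "b undefined"] ptE[OF that(2), of undefined]
    unfolding pitilde_def by (simp add: algebra_simps)
  have pte: "?pt e = 0" using ptadd[OF eE eE] ee by simp
  have inj: "\<pi>L f = \<pi>L g" if f: "f \<in> L" and g: "g \<in> L" and pfg: "?pt f = ?pt g" for f g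
  proof -
    obtain k where k: "k \<in> E" "f = k \<circ> g" using ell.minimal[OF ell_axioms g f] by blast
    have "?pt k = 0" using ptadd[OF k(1) LE[OF g]] k pfg by simp
    define k' where "k' = e \<circ> (k \<circ> e)"
    have keL: "k \<circ> e \<in> L" using L_iff k by blast
    have k'G: "k' \<in> G" unfolding k'_def G_iff using keL by blast
    have "?pt k' = 0" unfolding k'_def
      using ptadd[OF eE LE[OF keL]] ptadd[OF k(1) eE] pte \<open>?pt k = 0\<close> by simp
    then have "k' \<in> Lfib \<pi>eq E e" unfolding Lfib_def using k'G GL by auto
    then have "k' \<in> closure (ncl G e (little_group E e))"
      using nes k'G unfolding NES_def by blast
    then have "k' \<in> Kset" using closure_ncl_K by blast
    then have 1: "\<pi>L (k' \<circ> g) = \<pi>L g" using g unfolding Kset_def by blast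
    have egL: "e \<circ> g \<in> L" using mulL eE g by blast
    have "\<pi>L (k' \<circ> g) = \<pi>L (e \<circ> (k \<circ> (e \<circ> g)))" unfolding k'_def by (simp add: comp_assoc)
    also have "\<dots> = \<pi>L (k \<circ> (e \<circ> g))" using Idem[OF eE ee] mulL k(1) egL by blast
    also have "\<dots> = \<pi>L (k \<circ> g)" using KL[OF k(1) egL g] Idem[OF eE ee g] by blast
    finally show ?thesis using 1 k by simp
  qed
  have surj: "surj \<eta>0" using eta0_factor unfolding factor_map_def by simp
  have injh: "inj \<eta>0"
  proof (rule injI)
    fix a b assume ab: "\<eta>0 a = \<eta>0 b"
    obtain f where f: "f \<in> L" "a = \<pi>L f" using piL_surj by blast
    obtain g where g: "g \<in> L" "b = \<pi>L g" using piL_surj by blast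
    show "a = b" using inj[OF f(1) g(1)] eta0_comp f g ab by simp
  qed
  have pLe: "\<eta>0 (\<pi>L e) = 0" using eta0_comp eL pte by simp
  have "Lfib \<pi>eq E e = {f \<in> L. \<pi>L f = \<pi>L e}"
  proof safe
    fix f assume "f \<in> Lfib \<pi>eq E e"
    then have fL: "f \<in> L" and pf: "?pt f = 0" unfolding Lfib_def by auto
    then show "f \<in> L" by simp
    show "\<pi>L f = \<pi>L e" using inj[OF fL eL] pf pte by simp
  next
    fix f assume "f \<in> L" "\<pi>L f = \<pi>L e"
    then show "f \<in> Lfib \<pi>eq E e" unfolding Lfib_def using eta0_comp pLe by auto
  qed
  then show ?thesis using surj injh bij_def by blast
qed

end
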